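(* Under the standing assumptions, if $0\le a\le 1/4$ then $z(\theta)$ is negative and strictly increasing on $(\pi/2,\pi)$.
   Context: Standing assumptions: $a,b\in\mathbb{R}$ with $b>0$, $1+a+b>0$, $9-27a+b>0$, $2-8a+8a^2+ab\ne0$, $b+1-a\ne0$. Let $f^*(\zeta,\theta)=(\zeta+2\cos\theta)(2\zeta\cos\theta+1)+b\zeta-a(\zeta+2\cos\theta)^3$. Under these assumptions, for each $\theta\in(\pi/2,\pi)$ the polynomial $f^*(\cdot,\theta)$ has exactly one real zero in $(-1,1)$; denote it $w(\theta)$ (so $\zeta(\theta)=1/w(\theta)$). Define $\tau(\theta)=-w(\theta)-2\cos\theta$ and $z(\theta)=-\dfrac{w(\theta)}{\tau(\theta)^3}$ (i.e. $z=-1/(\zeta\tau^3)$). *)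

theory Defs
  imports Complex_Main
begin

definition fstar :: "real \<Rightarrow> real \<Rightarrow> real \<Rightarrow> real \<Rightarrow> real" where
  "fstar a b \<zeta> \<theta> =
     (\<zeta> + 2 * cos \<theta>) * (2 * \<zeta> * cos \<theta> + 1) + b * \<zeta> - a * (\<zeta> + 2 * cos \<theta>) ^ 3"

definition wz :: "real \<Rightarrow> real \<Rightarrow> real \<Rightarrow> real" where
  "wz a b \<theta> = (THE w. w \<in> {-1<..<1} \<and> fstar a b w \<theta> = 0)"

definition tau :: "real \<Rightarrow> real \<Rightarrow> real \<Rightarrow> real" where
  "tau a b \<theta> = - wz a b \<theta> - 2 * cos \<theta>"

definition zfun :: "real \<Rightarrow> real \<Rightarrow> real \<Rightarrow> real" where
  "zfun a b \<theta> = - wz a b \<theta> / (tau a b \<theta>) ^ 3"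

end

theory Submission imports Defs begin

definition Fc :: "real \<Rightarrow> real \<Rightarrow> real \<Rightarrow> real \<Rightarrow> real" where
  "Fc a b c w = (w + 2 * c) * (2 * w * c + 1) + b * w - a * (w + 2 * c) ^ 3"

lemma fstar_Fc: "fstar a b w \<theta> = Fc a b (cos \<theta>) w"
  unfolding fstar_def Fc_def by (simp add: algebra_simps)

lemma Fc_mono:
  assumes "0 \<le> a" "a \<le> 1/4" "b > 0" "-1 \<le> x" "x \<le> 1" "-1 \<le> y" "y \<le> 1" "x < y"
  shows "Fc a b c x < Fc a b c y"
proof -
  define X where "X = x + 2*c"
  define Y where "Y = y + 2*c"
  define K where "K = (X^2+Y^2) - 2*a*(X^2+X*Y+Y^2) + (2 - (x^2+y^2)) + 2*b"
  have id: "2*(Fc a b c y - Fc a b c x) = (y - x) * K"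
    unfolding Fc_def K_def X_def Y_def by (simp add: power2_eq_square power3_eq_cube algebra_simps)
  have q: "X^2+X*Y+Y^2 \<ge> 0"
  proof -
    have "X^2+X*Y+Y^2 = (X+Y/2)^2 + 3*Y^2/4" by (simp add: algebra_simps power2_eq_square)
    thus ?thesis by (simp add: add_nonneg_nonneg)
  qed
  have q2: "(X^2+Y^2) - 2*(1/4)*(X^2+X*Y+Y^2) \<ge> 0"
  proof -
    have "(X^2+Y^2) - 2*(1/4)*(X^2+X*Y+Y^2) = ((X - Y)^2 + X^2 + Y^2)/4"
      by (simp add: algebra_simps power2_eq_square)
    moreover have "0 \<le> ((X - Y)^2 + X^2 + Y^2)/4" by simp
    ultimately show ?thesis by linarith
  qed
  have "a*(X^2+X*Y+Y^2) \<le> (1/4)*(X^2+X*Y+Y^2)" using q assms(2) by (rule mult_right_mono[rotated])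
  moreover have "x^2 \<le> 1" "y^2 \<le> 1" using assms by (auto simp: abs_square_le_1)
  ultimately have "K > 0" unfolding K_def using q2 assms(3) by linarith
  hence "(y - x) * K > 0" using assms(8) by simp
  hence "2*(Fc a b c y - Fc a b c x) > 0" by (simp only: id)
  thus ?thesis by (simp add: algebra_simps del: Fc_def)
qed


definition hh :: "real \<Rightarrow> real \<Rightarrow> real \<Rightarrow> real" where
  "hh a b p = (p-1)^2*(1+b*p)/(4*(p^2-p+a))"

definition gg :: "real \<Rightarrow> real \<Rightarrow> real \<Rightarrow> real" where
  "gg a b p = p*(p^2-p+a)/(1+b*p)"

lemma div_helper: "(q::real) \<noteq> 0 \<Longrightarrow> A = 4*B \<Longrightarrow> A/(4*q*(4*q)) = B/(4*q^2)"
  by (simp add: power2_eq_square field_simps)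

lemma hh_deriv:
  fixes a b p :: real
  assumes "p < 0" "0 \<le> a"
  shows "(hh a b has_real_derivative
     (p-1)*(b*p^3 - b*p^2 + (1+3*a*b)*p + 2*a - a*b - 1)/(4*(p^2-p+a)^2)) (at p)"
proof -
  have D: "p^2-p+a > 0" using assms by (smt (verit) zero_le_power2)
  show ?thesis unfolding hh_def
    apply (rule derivative_eq_intros refl)+
    using D apply simp
    apply (rule div_helper)
    using D apply simp
    apply (simp add: algebra_simps power2_eq_square power3_eq_cube)
    done
qed

lemma hh_strict:
  fixes a b p q :: real
  assumes "p < q" "q < 0" "0 \<le> a" "a \<le> 1/4" "b > 0"
  shows "hh a b p < hh a b q"
proof (rule DERIV_pos_imp_increasing[OF assms(1)])
  fix x assume x: "p \<le> x" "x \<le> q"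
  hence x0: "x < 0" using assms by simp
  have D: "x^2-x+a > 0" using x0 assms by (smt (verit) zero_le_power2)
  have Q: "b*x^3 - b*x^2 + (1+3*a*b)*x + 2*a - a*b - 1 < 0"
  proof -
    have "b*x^3 < 0" using x0 assms by (simp add: mult_pos_neg power3_eq_cube mult_pos_pos mult_neg_neg)
    moreover have "b*x^2 \<ge> 0" using assms by simp
    moreover have "1+3*a*b > 0" using assms by (simp add: add_pos_nonneg)
    hence "(1+3*a*b)*x < 0" using x0 by (simp add: mult_pos_neg)
    moreover
    moreover have "a*b \<ge> 0" using assms by simp
    ultimately show ?thesis using assms by linarith
  qed
  have "(x-1)*(b*x^3 - b*x^2 + (1+3*a*b)*x + 2*a - a*b - 1) > 0"
    using Q x0 by (simp add: mult_neg_neg)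
  hence "(x-1)*(b*x^3 - b*x^2 + (1+3*a*b)*x + 2*a - a*b - 1)/(4*(x^2-x+a)^2) > 0"
    using D by simp
  thus "\<exists>y. DERIV (hh a b) x :> y \<and> 0 < y"
    using hh_deriv[OF x0 assms(3), of b] by blast
qed

lemma div_helper2: "(q::real) \<noteq> 0 \<Longrightarrow> A = B \<Longrightarrow> A/(q*q) = B/(q^2)"
  by (simp add: power2_eq_square)

lemma gg_deriv:
  fixes a b p :: real
  assumes "1 + b*p > 0"
  shows "(gg a b has_real_derivative (2*b*p^3 + (3-b)*p^2 - 2*p + a)/(1+b*p)^2) (at p)"
  unfolding gg_def
    apply (rule derivative_eq_intros refl)+
    using assms apply simp
    apply (rule div_helper2)
    using assms apply simp
    apply (simp add: algebra_simps power2_eq_square power3_eq_cube)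
    done

lemma gg_strict:
  fixes a b p q :: real
  assumes "p < q" "q < 0" "0 \<le> a" "b > 0" "1 + b*p > 0"
  shows "gg a b p < gg a b q"
proof (rule DERIV_pos_imp_increasing[OF assms(1)])
  fix x assume x: "p \<le> x" "x \<le> q"
  hence x0: "x < 0" using assms by simp
  have bx: "b*x \<ge> b*p" using x assms by (simp add: mult_left_mono)
  hence den: "1 + b*x > 0" using assms by linarith
  have "2*b*x^3 + (3-b)*x^2 - 2*x + a = 2*x^2*(1+b*x) + x^2 + (-x)*(b*x+2) + a"
    by (simp add: algebra_simps power2_eq_square power3_eq_cube)
  moreover have "2*x^2*(1+b*x) \<ge> 0" using den by simp
  moreover have "b*x+2 > 0" using den by linarith
  hence "(-x)*(b*x+2) > 0" using x0 by (intro mult_pos_pos) auto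
  moreover
  moreover have "x^2 \<ge> 0" by simp
  ultimately have "2*b*x^3 + (3-b)*x^2 - 2*x + a > 0" using assms by linarith
  hence "(2*b*x^3 + (3-b)*x^2 - 2*x + a)/(1+b*x)^2 > 0" using den by simp
  thus "\<exists>y. DERIV (gg a b) x :> y \<and> 0 < y" using gg_deriv[OF den, of a] by blast
qed


lemma Fc_cont: "continuous_on S (Fc a b c)"
  unfolding Fc_def by (intro continuous_intros)

lemma root_ex1:
  fixes a b c :: real
  assumes "-1 < c" "c < 0" "0 \<le> a" "a \<le> 1/4" "b > 0"
  shows "\<exists>!w. w \<in> {-1<..<1} \<and> Fc a b c w = 0"
proof -
  have m1: "Fc a b c (-1) < 0"
  proof -
    define s where "s = 1 - 2*c"
    have s: "1 < s" "s < 3" using assms unfolding s_def by auto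
    have e: "Fc a b c (-1) = s^2*(a*s - 1) - b" unfolding Fc_def s_def
      by (simp add: algebra_simps power2_eq_square power3_eq_cube)
    have "a*s \<le> (1/4)*s" using assms s by (intro mult_right_mono) auto
    hence "a*s - 1 < 0" using s by linarith
    hence "s^2*(a*s - 1) < 0" using s by (intro mult_pos_neg) auto
    thus ?thesis using e assms by linarith
  qed
  have p1: "Fc a b c 1 > 0"
  proof -
    define t where "t = 1 + 2*c"
    have t: "-1 < t" "t < 1" using assms unfolding t_def by auto
    have e: "Fc a b c 1 = t^2*(1 - a*t) + b" unfolding Fc_def t_def
      by (simp add: algebra_simps power2_eq_square power3_eq_cube)
    have "a*t \<le> a*1" using assms t by (intro mult_left_mono) auto
    hence "1 - a*t \<ge> 0" using assms by linarith
    hence "t^2*(1 - a*t) \<ge> 0" by simp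
    thus ?thesis using e assms by linarith
  qed
  obtain w where w: "-1 \<le> w" "w \<le> 1" "Fc a b c w = 0"
    using IVT'[of "Fc a b c" "-1" 0 1] m1 p1 Fc_cont by force
  have w': "w \<in> {-1<..<1}" using w m1 p1 by (cases "w = -1"; cases "w = 1") auto
  show ?thesis
  proof (rule ex1I[of _ w])
    show "w \<in> {-1<..<1} \<and> Fc a b c w = 0" using w w' by simp
  next
    fix y assume y: "y \<in> {-1<..<1} \<and> Fc a b c y = 0"
    show "y = w"
    proof (rule ccontr)
      assume "y \<noteq> w"
      hence "y < w \<or> w < y" by linarith
      thus False
      proof
        assume "y < w" thus False using Fc_mono[OF assms(3,4,5), of y w c] y w' w by auto
      next
        assume "w < y" thus False using Fc_mono[OF assms(3,4,5), of w y c] y w' w by auto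
      qed
    qed
  qed
qed

lemma root_props:
  fixes a b c w :: real
  assumes "-1 < c" "c < 0" "0 \<le> a" "a \<le> 1/4" "b > 0" "-1 < w" "w < 1" "Fc a b c w = 0"
  shows "0 < w" "0 < - w - 2*c"
proof -
  have f0: "Fc a b c 0 < 0"
  proof -
    have e: "Fc a b c 0 = 2*c*(1 - 4*a*c^2)" unfolding Fc_def
      by (simp add: algebra_simps power2_eq_square power3_eq_cube)
    have "c^2 < 1" using assms by (simp add: abs_square_less_1)
    moreover have "a*c^2 \<le> (1/4)*c^2" using assms by (intro mult_right_mono) auto
    ultimately have "1 - 4*a*c^2 > 0" by linarith
    thus ?thesis using e assms by (simp add: mult_neg_pos)
  qed
  show "0 < w"
  proof (rule ccontr)
    assume "\<not> 0 < w"
    hence "w < 0 \<or> w = 0" by linarith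
    thus False using Fc_mono[OF assms(3,4,5), of w 0 c] f0 assms by auto
  qed
  show "0 < - w - 2*c"
  proof (cases "-2*c < 1")
    case True
    have e: "Fc a b c (-2*c) = -2*b*c" unfolding Fc_def by simp
    have "-2*b*c > 0" using assms by (simp add: mult_pos_neg)
    show ?thesis
    proof (rule ccontr)
      assume "\<not> 0 < - w - 2*c"
      hence "-2*c < w \<or> w = -2*c" by linarith
      thus False using Fc_mono[OF assms(3,4,5), of "-2*c" w c] e \<open>-2*b*c > 0\<close> True assms by auto
    qed
  next
    case False
    thus ?thesis using assms by linarith
  qed
qed

lemma p_facts:
  fixes a b c w :: real
  assumes a: "0 \<le> a" and w: "0 < w" and t: "0 < - w - 2*c" and F: "Fc a b c w = 0"
  defines "\<tau> \<equiv> - w - 2*c"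
  defines "p \<equiv> - w / \<tau>"
  shows "p < 0" "1 + b*p > 0" "c^2 = hh a b p" "- w / \<tau>^3 = gg a b p"
proof -
  have tp: "\<tau> > 0" using t unfolding \<tau>_def .
  have cdef: "c = -(w + \<tau>)/2" unfolding \<tau>_def by simp
  have E0: "\<tau>*w^2 + w*\<tau>^2 + a*\<tau>^3 - \<tau> + b*w = Fc a b c w"
    unfolding Fc_def \<tau>_def by (simp add: algebra_simps power2_eq_square power3_eq_cube)
  have E: "\<tau>*w^2 + w*\<tau>^2 + a*\<tau>^3 - \<tau> + b*w = 0" using E0 F by simp
  show p0: "p < 0" unfolding p_def using w tp by simp
  have D: "p^2 - p + a > 0" using p0 a by (smt (verit) zero_le_power2)
  have I: "\<tau>^2*(p^2-p+a) = 1 + b*p"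
  proof -
    have "\<tau>^2*(p^2-p+a) - (1 + b*p) = (\<tau>*w^2 + w*\<tau>^2 + a*\<tau>^3 - \<tau> + b*w)/\<tau>"
      unfolding p_def using tp by (simp add: field_simps power2_eq_square power3_eq_cube)
    thus ?thesis using E by simp
  qed
  show bp: "1 + b*p > 0" using I D tp by (metis mult_pos_pos zero_less_power)
  have cp: "c = \<tau>*(p-1)/2" unfolding cdef p_def using tp by (simp add: field_simps)
  have t2: "\<tau>^2 = (1+b*p)/(p^2-p+a)" using I D by (simp add: field_simps)
  have "c^2 = \<tau>^2*(p-1)^2/4" unfolding cp by (simp add: power_mult_distrib power_divide)
  also have "\<dots> = (1+b*p)/(p^2-p+a)*(p-1)^2/4" by (simp only: t2)
  also have "\<dots> = hh a b p" unfolding hh_def using D by (simp add: field_simps)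
  finally show "c^2 = hh a b p" .
  have "- w / \<tau>^3 = p/\<tau>^2" unfolding p_def using tp by (simp add: field_simps power2_eq_square power3_eq_cube)
  also have "\<dots> = p/((1+b*p)/(p^2-p+a))" by (simp only: t2)
  also have "\<dots> = gg a b p" unfolding gg_def using D bp by (simp add: field_simps)
  finally show "- w / \<tau>^3 = gg a b p" .
qed


lemma cos_range:
  assumes "\<theta> \<in> {pi/2<..<pi}"
  shows "-1 < cos \<theta>" "cos \<theta> < 0"
proof -
  have t: "pi/2 < \<theta>" "\<theta> < pi" using assms by auto
  have "cos pi < cos \<theta>" using t pi_gt_zero by (intro cos_monotone_0_pi) auto
  thus "-1 < cos \<theta>" by simp
  have "cos \<theta> < cos (pi/2)" using t pi_gt_zero by (intro cos_monotone_0_pi) auto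
  thus "cos \<theta> < 0" by simp
qed

lemma key:
  fixes a b :: real
  assumes "0 \<le> a" "a \<le> 1/4" "b > 0" "\<theta> \<in> {pi/2<..<pi}"
  shows "\<exists>p. p < 0 \<and> 1 + b*p > 0 \<and> (cos \<theta>)^2 = hh a b p \<and> zfun a b \<theta> = gg a b p"
proof -
  note cr = cos_range[OF assms(4)]
  have ex: "\<exists>!w. w \<in> {-1<..<1} \<and> fstar a b w \<theta> = 0"
    unfolding fstar_Fc using root_ex1[OF cr assms(1,2,3)] .
  have W: "wz a b \<theta> \<in> {-1<..<1} \<and> fstar a b (wz a b \<theta>) \<theta> = 0"
    unfolding wz_def by (rule theI'[OF ex])
  hence W2: "-1 < wz a b \<theta>" "wz a b \<theta> < 1" "Fc a b (cos \<theta>) (wz a b \<theta>) = 0"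
    by (auto simp: fstar_Fc)
  note rp = root_props[OF cr assms(1,2,3) W2]
  note pf = p_facts[OF assms(1) rp W2(3)]
  have z: "zfun a b \<theta> = - wz a b \<theta> / (- wz a b \<theta> - 2 * cos \<theta>)^3"
    unfolding zfun_def tau_def by simp
  show ?thesis using pf z by metis
qed

theorem mainTheorem15:
  fixes a b :: real
  assumes "b > 0" and "1 + a + b > 0" and "9 - 27 * a + b > 0"
    and "2 - 8 * a + 8 * a ^ 2 + a * b \<noteq> 0" and "b + 1 - a \<noteq> 0"
    and "0 \<le> a" and "a \<le> 1 / 4"
  shows "(\<forall>\<theta> \<in> {pi / 2 <..< pi}. zfun a b \<theta> < 0) \<and>
         strict_mono_on {pi / 2 <..< pi} (zfun a b)"
proof
  show "\<forall>\<theta> \<in> {pi / 2 <..< pi}. zfun a b \<theta> < 0"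
  proof
    fix \<theta> :: real assume th: "\<theta> \<in> {pi / 2 <..< pi}"
    obtain p where p: "p < 0" "1 + b*p > 0" "zfun a b \<theta> = gg a b p"
      using key[OF assms(6,7,1) th] by blast
    have D: "p^2 - p + a > 0" using p assms(6) by (smt (verit) zero_le_power2)
    have "p*(p^2-p+a) < 0" using p D by (simp add: mult_neg_pos)
    thus "zfun a b \<theta> < 0" unfolding p gg_def using p by (simp add: divide_neg_pos)
  qed
next
  show "strict_mono_on {pi / 2 <..< pi} (zfun a b)"
  proof (rule strict_mono_onI)
    fix r s :: real assume r: "r \<in> {pi / 2 <..< pi}" and s: "s \<in> {pi / 2 <..< pi}" and rs: "r < s"
    obtain p where p: "p < 0" "1 + b*p > 0" "(cos r)^2 = hh a b p" "zfun a b r = gg a b p"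
      using key[OF assms(6,7,1) r] by blast
    obtain q where q: "q < 0" "1 + b*q > 0" "(cos s)^2 = hh a b q" "zfun a b s = gg a b q"
      using key[OF assms(6,7,1) s] by blast
    have "cos s < cos r" using r s rs pi_gt_zero by (intro cos_monotone_0_pi) auto
    moreover have "cos r < 0" using cos_range[OF r] by simp
    ultimately have "(- cos r)^2 < (- cos s)^2"
      by (intro power_strict_mono) auto
    hence "(cos r)^2 < (cos s)^2" by simp
    hence hpq: "hh a b p < hh a b q" using p q by simp
    have "p < q"
    proof (rule ccontr)
      assume "\<not> p < q"
      hence "q < p \<or> q = p" by linarith
      thus False
      proof
        assume "q < p" thus False using hh_strict[OF _ p(1) assms(6,7,1), of q] hpq by simp
      qed (use hpq in simp)
    qed
    thus "zfun a b r < zfun a b s" using gg_strict[OF _ q(1) assms(6,1) p(2)] p q by simp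
  qed
qed

end
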